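(* Let $\gamma:S^n\to\mathbb{R}_+$ be continuous. Then $\mathcal W_\gamma$ is a self-dual Wulff shape if and only if the spherical convex body $\alpha_N^{-1}\circ Id(\mathcal W_\gamma)\subset S^{n+1}$ is of constant diameter $\pi/2$.
   Context: Wulff shapes. For continuous $\gamma:S^n\to\mathbb{R}_+$, the Wulff shape is $\mathcal W_\gamma=\bigcap_{\theta\in S^n}\{x\in\mathbb{R}^{n+1}:x\cdot\theta\le\gamma(\theta)\}$. Its radial function is $\rho(\theta)=\max\{\lambda>0:\lambda\theta\in\mathcal W_\gamma\}$. Dual and self-dual Wulff shapes. With $\bar\gamma(\theta)=1/\rho(-\theta)$, the dual Wulff shape is $\mathcal{DW}_\gamma=\mathcal W_{\bar\gamma}$; equivalently $\mathcal{DW}_\gamma=-(\mathcal W_\gamma)^\circ$, where $K^\circ=\{x:x\cdot y\le1\ \forall y\in K\}$ is the Euclidean polar. $\mathcal W_\gamma$ is self-dual if $\mathcal W_\gamma=\mathcal{DW}_\gamma$. The maps. $Id(x)=(x,1)$. With $N=(0,\dots,0,1)$ and $S^{n+1}_{N,+}=\{Q\in S^{n+1}:Q_{n+2}>0\}$, the central projection $\alpha_N:S^{n+1}_{N,+}\to\mathbb{R}^{n+1}\times\{1\}$ is $\alpha_N(P_1,\dots,P_{n+2})=(P_1/P_{n+2},\dots,P_{n+1}/P_{n+2},1)$. Constant diameter. The spherical distance on $S^{n+1}$ is $|PQ|=\arccos(P\cdot Q)$. The diameter of $K$ is $\max\{|PQ|:P,Q\in K\}$. A spherical convex body $K$ is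 of constant diameter $\tau$ if its diameter is $\tau$ and, for every boundary point $P$ of $K$ (boundary relative to $S^{n+1}$), there is $Q\in K$ with $|PQ|=\tau$. *)

theory Defs
  imports "HOL-Analysis.Analysis"
begin

text \<open>R^{n+1} is modelled by an arbitrary Euclidean space 'a; S^n is its unit sphere.
  R^{n+2} = R^{n+1} x R is modelled by the product type 'a \<times> real, and
  S^{n+1} is the unit sphere there.\<close>

definition wulff :: "('a::euclidean_space \<Rightarrow> real) \<Rightarrow> 'a set" where
  "wulff \<gamma> = (\<Inter>\<theta>\<in>sphere 0 1. {x. x \<bullet> \<theta> \<le> \<gamma> \<theta>})"

definition radial :: "'a::euclidean_space set \<Rightarrow> 'a \<Rightarrow> real" where
  "radial W \<theta> = Sup {t. t > 0 \<and> t *\<^sub>R \<theta> \<in> W}"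

definition dual_gamma :: "('a::euclidean_space \<Rightarrow> real) \<Rightarrow> 'a \<Rightarrow> real" where
  "dual_gamma \<gamma> \<theta> = 1 / radial (wulff \<gamma>) (- \<theta>)"

definition dual_wulff :: "('a::euclidean_space \<Rightarrow> real) \<Rightarrow> 'a set" where
  "dual_wulff \<gamma> = wulff (dual_gamma \<gamma>)"

definition self_dual :: "('a::euclidean_space \<Rightarrow> real) \<Rightarrow> bool" where
  "self_dual \<gamma> \<longleftrightarrow> wulff \<gamma> = dual_wulff \<gamma>"

definition Id_map :: "'a::euclidean_space \<Rightarrow> 'a \<times> real" where
  "Id_map x = (x, 1)"

definition north_hemisphere :: "('a::euclidean_space \<times> real) set" where
  "north_hemisphere = {Q \<in> sphere 0 1. snd Q > 0}"

definition alpha_N :: "'a::euclidean_space \<times> real \<Rightarrow> 'a \<times> real" where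
  "alpha_N P = ((1 / snd P) *\<^sub>R fst P, 1)"

definition alpha_N_inv_image :: "('a::euclidean_space \<times> real) set \<Rightarrow> ('a \<times> real) set" where
  "alpha_N_inv_image A = {P \<in> north_hemisphere. alpha_N P \<in> A}"

definition sph_dist :: "'b::real_inner \<Rightarrow> 'b \<Rightarrow> real" where
  "sph_dist P Q = arccos (P \<bullet> Q)"

definition sph_diameter :: "'b::real_inner set \<Rightarrow> real" where
  "sph_diameter K = Sup {sph_dist P Q | P Q. P \<in> K \<and> Q \<in> K}"

definition constant_diameter :: "'b::euclidean_space set \<Rightarrow> real \<Rightarrow> bool" where
  "constant_diameter K \<tau> \<longleftrightarrow>
     sph_diameter K = \<tau> \<and>
     (\<forall>P \<in> (top_of_set (sphere 0 1)) frontier_of K. \<exists>Q \<in> K. sph_dist P Q = \<tau>)"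

end

theory Submission
  imports Defs
begin


definition pr :: "'a::euclidean_space \<Rightarrow> 'a \<times> real" where
  "pr x = (1 / sqrt (1 + (norm x)\<^sup>2)) *\<^sub>R (x, 1)"

lemma pos1: "1 + (norm (x::'a::real_normed_vector))\<^sup>2 > 0"
  by (metis add_pos_nonneg zero_less_one zero_le_power2)

lemma sq_pos: "sqrt (1 + (norm (x::'a::real_normed_vector))\<^sup>2) > 0"
  by (simp add: add_pos_nonneg)

lemma pr_norm: "norm (pr x) = 1"
proof -
  have "norm ((x,1::real)) = sqrt (1 + (norm x)\<^sup>2)" by (simp add: norm_Pair add.commute)
  have "norm (pr x) = \<bar>1 / sqrt (1 + (norm x)\<^sup>2)\<bar> * norm ((x,1::real))"
    unfolding pr_def by (rule norm_scaleR)
  thus ?thesis using sq_pos[of x] \<open>norm ((x,1::real)) = _\<close> by simp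
qed

lemma pr_inner: "pr x \<bullet> pr y = (x \<bullet> y + 1) / (sqrt (1 + (norm x)\<^sup>2) * sqrt (1 + (norm y)\<^sup>2))"
  unfolding pr_def by (simp add: field_simps add_divide_distrib[symmetric])

lemma pr_inner_zero: "pr x \<bullet> pr y = 0 \<longleftrightarrow> x \<bullet> y = -1"
  using sq_pos[of x] sq_pos[of y] by (auto simp: pr_inner)

lemma pr_inner_nonneg: "pr x \<bullet> pr y \<ge> 0 \<longleftrightarrow> x \<bullet> y \<ge> -1"
  using sq_pos[of x] sq_pos[of y] by (smt (verit) pr_inner zero_le_divide_iff mult_pos_pos)

lemma pr_snd: "snd (pr x) > 0" using sq_pos[of x] by (simp add: pr_def)

lemma pr_proj: "(1 / snd (pr x)) *\<^sub>R fst (pr x) = x"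
  using sq_pos[of x] pos1[of x] by (simp add: pr_def del: real_sqrt_gt_0_iff)

lemma unit_pr: assumes "norm P = 1" "snd P > 0"
  shows "P = pr ((1 / snd P) *\<^sub>R fst P)"
proof -
  obtain a b where P: "P = (a,b)" by force
  have b: "b > 0" using assms P by simp
  have n: "(norm a)\<^sup>2 + b\<^sup>2 = 1" using assms(1) P by (simp add: norm_Pair)
  have "1 + (norm ((1/b) *\<^sub>R a))\<^sup>2 = (1/b)\<^sup>2"
    using n b by (simp add: power_divide field_simps)
  hence "sqrt (1 + (norm ((1/b) *\<^sub>R a))\<^sup>2) = 1/b" using b by simp
  thus ?thesis using b P by (simp add: pr_def)
qed

lemma K_char: "alpha_N_inv_image (Id_map ` W) = pr ` W"
proof
  show "alpha_N_inv_image (Id_map ` W) \<subseteq> pr ` W"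
  proof
    fix P assume "P \<in> alpha_N_inv_image (Id_map ` W)"
    hence P: "norm P = 1" "snd P > 0" "(1 / snd P) *\<^sub>R fst P \<in> W"
      by (auto simp: alpha_N_inv_image_def north_hemisphere_def alpha_N_def Id_map_def)
    thus "P \<in> pr ` W" using unit_pr[OF P(1,2)] by blast
  qed
  show "pr ` W \<subseteq> alpha_N_inv_image (Id_map ` W)"
  proof
    fix P assume "P \<in> pr ` W"
    then obtain x where x: "x \<in> W" "P = pr x" by blast
    show "P \<in> alpha_N_inv_image (Id_map ` W)"
      unfolding alpha_N_inv_image_def north_hemisphere_def alpha_N_def Id_map_def
      using x pr_norm[of x] pr_snd[of x] pr_proj[of x] by auto
  qed
qed

lemma pr_in: "pr x \<in> pr ` W \<longleftrightarrow> x \<in> W"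
  using pr_proj by (metis image_iff)

lemma pr_cont: "continuous_on UNIV pr"
  unfolding pr_def by (intro continuous_intros) (intro ballI, smt (verit) sq_pos)




definition Dset :: "'a::euclidean_space set \<Rightarrow> 'a set" where
  "Dset W = {x. \<forall>y\<in>W. x \<bullet> y \<ge> -1}"

lemma radial_facts:
  fixes W :: "'a::euclidean_space set"
  assumes m: "m > 0" "ball 0 m \<subseteq> W" and M: "\<forall>x\<in>W. norm x \<le> M" and u: "norm u = 1"
  shows "radial W u > 0" "\<And>t. t > 0 \<Longrightarrow> t *\<^sub>R u \<in> W \<Longrightarrow> t \<le> radial W u"
        "\<And>c. (\<And>t. t > 0 \<Longrightarrow> t *\<^sub>R u \<in> W \<Longrightarrow> t \<le> c) \<Longrightarrow> radial W u \<le> c"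
proof -
  let ?S = "{t. t > 0 \<and> t *\<^sub>R u \<in> W}"
  have bdd: "bdd_above ?S"
  proof (rule bdd_aboveI)
    fix t assume "t \<in> ?S"
    thus "t \<le> M" using M u by force
  qed
  have mS: "m/2 \<in> ?S" using m u by (auto simp: subset_iff)
  show up: "\<And>t. t > 0 \<Longrightarrow> t *\<^sub>R u \<in> W \<Longrightarrow> t \<le> radial W u"
    unfolding radial_def by (rule cSup_upper) (use bdd in auto)
  show "radial W u > 0" using up[of "m/2"] mS m by auto
  show "\<And>c. (\<And>t. t > 0 \<Longrightarrow> t *\<^sub>R u \<in> W \<Longrightarrow> t \<le> c) \<Longrightarrow> radial W u \<le> c"
    unfolding radial_def by (rule cSup_least) (use mS m in \<open>auto intro: half_gt_zero\<close>)
qed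

lemma dual_eq:
  fixes W :: "'a::euclidean_space set"
  assumes m: "m > 0" "ball 0 m \<subseteq> W" and M: "\<forall>x\<in>W. norm x \<le> M"
  shows "wulff (\<lambda>\<theta>. 1 / radial W (- \<theta>)) = Dset W"
proof
  show "wulff (\<lambda>\<theta>. 1 / radial W (- \<theta>)) \<subseteq> Dset W"
  proof
    fix x assume x: "x \<in> wulff (\<lambda>\<theta>. 1 / radial W (- \<theta>))"
    show "x \<in> Dset W" unfolding Dset_def
    proof (intro CollectI ballI)
      fix y assume y: "y \<in> W"
      show "x \<bullet> y \<ge> -1"
      proof (cases "y = 0")
        case True thus ?thesis by simp
      next
        case False
        define \<theta> where "\<theta> = - ((1 / norm y) *\<^sub>R y)"
        have nt: "norm \<theta> = 1" using False by (simp add: \<theta>_def)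
        have mt: "- \<theta> = (1 / norm y) *\<^sub>R y" by (simp add: \<theta>_def)
        have "norm y *\<^sub>R (- \<theta>) = y" using False by (simp add: mt)
        hence le: "norm y \<le> radial W (- \<theta>)"
          using radial_facts(2)[OF m M, of "-\<theta>" "norm y"] nt y False by simp
        have ny: "norm y > 0" using False by simp
        have "x \<bullet> \<theta> \<le> 1 / radial W (- \<theta>)" using x nt unfolding wulff_def by auto
        also have "\<dots> \<le> 1 / norm y" using le ny by (simp add: frac_le)
        finally have h: "x \<bullet> \<theta> \<le> 1 / norm y" .
        have "x \<bullet> y = - norm y * (x \<bullet> \<theta>)" using False by (simp add: \<theta>_def)
        show ?thesis using h ny \<open>x \<bullet> y = _\<close> by (simp add: field_simps)
      qed
    qed
  qed
  show "Dset W \<subseteq> wulff (\<lambda>\<theta>. 1 / radial W (- \<theta>))"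
  proof
    fix x assume x: "x \<in> Dset W"
    show "x \<in> wulff (\<lambda>\<theta>. 1 / radial W (- \<theta>))" unfolding wulff_def
    proof (intro InterI, clarify)
      fix \<theta> :: 'a assume th: "\<theta> \<in> sphere 0 1"
      hence nt: "norm (-\<theta>) = 1" by simp
      have rp: "radial W (-\<theta>) > 0" using radial_facts(1)[OF m M nt] .
      show "x \<bullet> \<theta> \<le> 1 / radial W (- \<theta>)"
      proof (cases "x \<bullet> \<theta> \<le> 0")
        case True thus ?thesis using rp by (smt (verit) divide_pos_pos)
      next
        case False
        hence p: "x \<bullet> \<theta> > 0" by simp
        have "radial W (-\<theta>) \<le> 1 / (x \<bullet> \<theta>)"
        proof (rule radial_facts(3)[OF m M nt])
          fix t assume t: "t > 0" "t *\<^sub>R - \<theta> \<in> W"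
          have "x \<bullet> (t *\<^sub>R - \<theta>) \<ge> -1" using x t unfolding Dset_def by blast
          hence "t * (x \<bullet> \<theta>) \<le> 1" by simp
          thus "t \<le> 1 / (x \<bullet> \<theta>)" using p by (simp add: field_simps)
        qed
        thus ?thesis using p rp by (simp add: field_simps)
      qed
    qed
  qed
qed




lemma sphere_ne: "sphere (0::'a::euclidean_space) 1 \<noteq> {}"
proof -
  have "(SOME i. i \<in> (Basis::'a set)) \<in> Basis" by (rule someI_ex) (use nonempty_Basis in blast)
  hence "norm (SOME i. i \<in> (Basis::'a set)) = 1" by simp
  thus ?thesis by (metis empty_iff mem_sphere_0)
qed

lemma wulff_basic:
  fixes \<gamma> :: "'a::euclidean_space \<Rightarrow> real"
  assumes c: "continuous_on (sphere 0 1) \<gamma>" and p: "\<forall>\<theta> \<in> sphere 0 1. \<gamma> \<theta> > 0"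
  shows "\<exists>m>0. ball 0 m \<subseteq> wulff \<gamma>" "\<exists>M>0. \<forall>x\<in>wulff \<gamma>. norm x \<le> M" "closed (wulff \<gamma>)"
proof -
  obtain a where a: "a \<in> sphere 0 1" "\<forall>y\<in>sphere 0 1. \<gamma> a \<le> \<gamma> y"
    using continuous_attains_inf[OF compact_sphere sphere_ne c] by blast
  obtain b where b: "b \<in> sphere 0 1" "\<forall>y\<in>sphere 0 1. \<gamma> y \<le> \<gamma> b"
    using continuous_attains_sup[OF compact_sphere sphere_ne c] by blast
  have "ball 0 (\<gamma> a) \<subseteq> wulff \<gamma>"
  proof
    fix x :: 'a assume "x \<in> ball 0 (\<gamma> a)"
    hence x: "norm x < \<gamma> a" by simp
    show "x \<in> wulff \<gamma>" unfolding wulff_def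
    proof (intro InterI, clarify)
      fix \<theta> :: 'a assume th: "\<theta> \<in> sphere 0 1"
      have "x \<bullet> \<theta> \<le> norm x * norm \<theta>" by (rule norm_cauchy_schwarz)
      moreover have "\<gamma> a \<le> \<gamma> \<theta>" using th a(2) by blast
      ultimately show "x \<bullet> \<theta> \<le> \<gamma> \<theta>" using th x by simp
    qed
  qed
  thus "\<exists>m>0. ball 0 m \<subseteq> wulff \<gamma>" using a p by blast
  have "\<forall>x\<in>wulff \<gamma>. norm x \<le> \<gamma> b"
  proof
    fix x assume x: "x \<in> wulff \<gamma>"
    show "norm x \<le> \<gamma> b"
    proof (cases "x = 0")
      case True thus ?thesis using p b(1) by (simp add: less_imp_le)
    next
      case False
      define u where "u = (1 / norm x) *\<^sub>R x"
      have u: "u \<in> sphere 0 1" using False by (simp add: u_def)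
      have "x \<bullet> u \<le> \<gamma> u" using x u unfolding wulff_def by blast
      moreover have "x \<bullet> u = norm x" using False
        by (simp add: u_def dot_square_norm power2_eq_square)
      ultimately show ?thesis using b u by force
    qed
  qed
  thus "\<exists>M>0. \<forall>x\<in>wulff \<gamma>. norm x \<le> M" using b p by blast
  show "closed (wulff \<gamma>)" unfolding wulff_def
    by (intro closed_INT ballI closed_Collect_le continuous_intros)
qed

lemma ray:
  fixes W :: "'a::euclidean_space set"
  assumes cl: "closed W" and m: "m > 0" "ball 0 m \<subseteq> W" and z: "z \<notin> W"
  shows "\<exists>t. 0 < t \<and> t < 1 \<and> t *\<^sub>R z \<in> W \<and>
            (\<forall>\<delta>>0. \<exists>s. s *\<^sub>R z \<notin> W \<and> norm (s *\<^sub>R z - t *\<^sub>R z) < \<delta>)"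
proof -
  define S where "S = {s. s \<in> {0..1} \<and> s *\<^sub>R z \<in> W}"
  have z0: "z \<noteq> 0" using z m by (metis centre_in_ball subsetD)
  have clS: "closed S"
  proof -
    have "closed ((\<lambda>s::real. s *\<^sub>R z) -` W)"
      by (rule continuous_closed_vimage[OF cl]) (intro continuous_intros)
    moreover have "S = {0..1} \<inter> (\<lambda>s::real. s *\<^sub>R z) -` W" by (auto simp: S_def)
    ultimately show ?thesis by auto
  qed
  have bdd: "bdd_above S" by (rule bdd_aboveI[of _ 1]) (auto simp: S_def)
  define s0 where "s0 = min 1 (m / (2 * norm z))"
  have s0p: "s0 > 0" using m z0 by (simp add: s0_def)
  have "norm (s0 *\<^sub>R z) < m"
  proof -
    have "norm (s0 *\<^sub>R z) = s0 * norm z" using s0p by simp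
    also have "\<dots> \<le> (m / (2 * norm z)) * norm z" using z0
      by (intro mult_right_mono) (auto simp: s0_def)
    also have "\<dots> = m/2" using z0 by simp
    finally show ?thesis using m by simp
  qed
  hence s0S: "s0 \<in> S" using m s0p by (auto simp: S_def s0_def subset_iff)
  define t where "t = Sup S"
  have tS: "t \<in> S" unfolding t_def using closed_contains_Sup[OF _ bdd clS] s0S by blast
  have tpos: "t > 0" using cSup_upper[OF s0S bdd] s0p t_def by simp
  have t1: "t < 1" using tS z by (auto simp: S_def) (metis order_le_less scaleR_one)
  have out: "\<And>s. t < s \<Longrightarrow> s \<le> 1 \<Longrightarrow> s *\<^sub>R z \<notin> W"
  proof
    fix s assume "t < s" "s \<le> 1" "s *\<^sub>R z \<in> W"
    hence "s \<in> S" using tpos by (auto simp: S_def)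
    thus False using cSup_upper[OF _ bdd] \<open>t < s\<close> t_def by fastforce
  qed
  have "\<forall>\<delta>>0. \<exists>s. s *\<^sub>R z \<notin> W \<and> norm (s *\<^sub>R z - t *\<^sub>R z) < \<delta>"
  proof (intro allI impI)
    fix \<delta> :: real assume d: "\<delta> > 0"
    define s where "s = t + min (1 - t) (\<delta> / (2 * norm z))"
    have st: "t < s" "s \<le> 1" using t1 d z0 by (auto simp: s_def)
    have "norm (s *\<^sub>R z - t *\<^sub>R z) = (s - t) * norm z"
      using st by (simp add: scaleR_diff_left[symmetric])
    also have "\<dots> \<le> (\<delta> / (2 * norm z)) * norm z"
      by (intro mult_right_mono) (auto simp: s_def)
    also have "\<dots> = \<delta>/2" using z0 by simp
    finally have "norm (s *\<^sub>R z - t *\<^sub>R z) < \<delta>" using d by simp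
    thus "\<exists>s. s *\<^sub>R z \<notin> W \<and> norm (s *\<^sub>R z - t *\<^sub>R z) < \<delta>" using out[OF st] by blast
  qed
  thus ?thesis using tpos t1 tS by (auto simp: S_def)
qed




lemma interior_L:
  fixes W :: "'a::euclidean_space set"
  assumes cW: "compact W" and ne: "W \<noteq> {}" and M: "\<forall>y\<in>W. norm y \<le> M" "M > 0"
    and x: "x \<in> Dset W" and nx: "\<forall>y\<in>W. x \<bullet> y \<noteq> -1"
  shows "\<exists>e>0. ball x e \<subseteq> Dset W"
proof -
  obtain y0 where y0: "y0 \<in> W" "\<forall>y\<in>W. x \<bullet> y0 \<le> x \<bullet> y"
  proof -
    have "continuous_on W (\<lambda>y. x \<bullet> y)" by (intro continuous_intros)
    thus ?thesis using continuous_attains_inf[OF cW ne, of "\<lambda>y. x \<bullet> y"] that by blast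
  qed
  have mv: "x \<bullet> y0 > -1" using x y0 nx unfolding Dset_def by force
  define e where "e = (x \<bullet> y0 + 1) / M"
  have ep: "e > 0" using mv M by (simp add: e_def)
  have "ball x e \<subseteq> Dset W"
  proof
    fix x' assume "x' \<in> ball x e"
    hence d: "norm (x' - x) < e" by (simp add: dist_norm norm_minus_commute)
    show "x' \<in> Dset W" unfolding Dset_def
    proof (intro CollectI ballI)
      fix y assume y: "y \<in> W"
      have "\<bar>(x' - x) \<bullet> y\<bar> \<le> norm (x' - x) * norm y" by (rule Cauchy_Schwarz_ineq2)
      also have "\<dots> \<le> e * M" using d M y ep
        by (intro mult_mono) auto
      also have "\<dots> = x \<bullet> y0 + 1" using M by (simp add: e_def)
      finally have "\<bar>(x' - x) \<bullet> y\<bar> \<le> x \<bullet> y0 + 1" .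
      moreover have "x' \<bullet> y = x \<bullet> y + (x' - x) \<bullet> y" by (simp add: inner_diff_left)
      ultimately show "x' \<bullet> y \<ge> -1" using y0(2) y by force
    qed
  qed
  thus ?thesis using ep by blast
qed

lemma front1:
  fixes W :: "'a::euclidean_space set"
  assumes cW: "compact W"
    and P: "P \<in> (top_of_set (sphere 0 1)) frontier_of (pr ` W)"
  shows "\<exists>x\<in>W. P = pr x \<and> x \<notin> interior W"
proof -
  have Ksub: "pr ` W \<subseteq> sphere 0 1" using pr_norm by auto
  have cK: "compact (pr ` W)"
    by (rule compact_continuous_image[OF continuous_on_subset[OF pr_cont] cW]) auto
  have "P \<in> (top_of_set (sphere 0 1)) closure_of (pr ` W)" using P by (simp add: frontier_of_def)
  hence "P \<in> closure (sphere 0 1 \<inter> pr ` W)" by (simp add: closure_of_subtopology)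
  hence "P \<in> closure (pr ` W)" using Ksub by (simp add: Int_absorb1)
  hence "P \<in> pr ` W" using cK by (simp add: compact_imp_closed closure_closed)
  then obtain x where x: "x \<in> W" "P = pr x" by blast
  have "x \<notin> interior W"
  proof
    assume "x \<in> interior W"
    then obtain U where U: "open U" "x \<in> U" "U \<subseteq> W" by (meson interiorE)
    define g where "g = (\<lambda>Q::'a\<times>real. (1 / snd Q) *\<^sub>R fst Q)"
    define T' where "T' = {Q::'a\<times>real. snd Q > 0} \<inter> g -` U"
    have "continuous_on {Q::'a\<times>real. snd Q > 0} g" unfolding g_def
      by (intro continuous_intros) auto
    hence oT: "open T'" unfolding T'_def
      by (rule continuous_open_preimage) (use U in \<open>auto intro!: open_Collect_less continuous_intros\<close>)
    have "openin (top_of_set (sphere 0 1)) (T' \<inter> sphere 0 1)"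
      using oT by (auto simp: openin_subtopology)
    moreover have "P \<in> T' \<inter> sphere 0 1" using x pr_snd[of x] pr_proj[of x] U pr_norm[of x]
      by (auto simp: T'_def g_def)
    moreover have "T' \<inter> sphere 0 1 \<subseteq> pr ` W"
    proof
      fix Q assume "Q \<in> T' \<inter> sphere 0 1"
      hence Q: "snd Q > 0" "g Q \<in> U" "norm Q = 1" by (auto simp: T'_def)
      have "Q = pr (g Q)" using unit_pr[OF Q(3,1)] by (simp add: g_def)
      thus "Q \<in> pr ` W" using Q U by blast
    qed
    ultimately have "P \<in> (top_of_set (sphere 0 1)) interior_of (pr ` W)"
      unfolding interior_of_def by blast
    thus False using P by (simp add: frontier_of_def)
  qed
  thus ?thesis using x by blast
qed

lemma front2:
  fixes W :: "'a::euclidean_space set"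
  assumes x: "x \<in> W" and near: "\<forall>\<delta>>0. \<exists>w. w \<notin> W \<and> norm (w - x) < \<delta>"
  shows "pr x \<in> (top_of_set (sphere 0 1)) frontier_of (pr ` W)"
proof -
  have "pr x \<in> (top_of_set (sphere 0 1)) closure_of (pr ` W)"
    using x pr_norm[of x] by (auto simp: in_closure_of)
  moreover have "pr x \<notin> (top_of_set (sphere 0 1)) interior_of (pr ` W)"
  proof
    assume "pr x \<in> (top_of_set (sphere 0 1)) interior_of (pr ` W)"
    then obtain T where T: "openin (top_of_set (sphere 0 1)) T" "pr x \<in> T" "T \<subseteq> pr ` W"
      unfolding interior_of_def by blast
    then obtain T' where T': "open T'" "T = T' \<inter> sphere 0 1" by (auto simp: openin_subtopology)
    have "open (pr -` T')"
      by (rule continuous_open_vimage[OF T'(1)]) (metis pr_cont continuous_on_eq_continuous_at open_UNIV UNIV_I)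
    moreover have "x \<in> pr -` T'" using T T' by auto
    ultimately obtain e where e: "e > 0" "ball x e \<subseteq> pr -` T'" by (meson openE)
    obtain w where w: "w \<notin> W" "norm (w - x) < e" using near e by blast
    have "w \<in> ball x e" using w by (simp add: dist_norm norm_minus_commute)
    hence "pr w \<in> T" using e T' pr_norm[of w] by auto
    hence "w \<in> W" using T pr_in by blast
    thus False using w by blast
  qed
  ultimately show ?thesis by (simp add: frontier_of_def)
qed




lemma pr_inner_bounds: "-1 \<le> pr x \<bullet> pr y \<and> pr x \<bullet> pr y \<le> 1"
proof -
  have "\<bar>pr x \<bullet> pr y\<bar> \<le> norm (pr x) * norm (pr y)" by (rule Cauchy_Schwarz_ineq2)
  thus ?thesis using pr_norm[of x] pr_norm[of y] by auto
qed

lemma dist_le: "sph_dist (pr x) (pr y) \<le> pi/2 \<longleftrightarrow> x \<bullet> y \<ge> -1"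
proof -
  have b: "-1 \<le> pr x \<bullet> pr y" "pr x \<bullet> pr y \<le> 1" using pr_inner_bounds by auto
  show ?thesis
  proof
    assume a: "sph_dist (pr x) (pr y) \<le> pi/2"
    show "x \<bullet> y \<ge> -1"
    proof (rule ccontr)
      assume "\<not> x \<bullet> y \<ge> -1"
      hence "pr x \<bullet> pr y < 0" using pr_inner_nonneg[of x y] by linarith
      hence "arccos 0 < arccos (pr x \<bullet> pr y)" using b by (intro arccos_less_arccos) auto
      thus False using a by (simp add: sph_dist_def)
    qed
  next
    assume "x \<bullet> y \<ge> -1"
    hence "pr x \<bullet> pr y \<ge> 0" using pr_inner_nonneg by blast
    thus "sph_dist (pr x) (pr y) \<le> pi/2" using b arccos_le_pi2[of "pr x \<bullet> pr y"]
      unfolding sph_dist_def by linarith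
  qed
qed

lemma dist_eq: "sph_dist (pr x) (pr y) = pi/2 \<longleftrightarrow> x \<bullet> y = -1"
proof -
  have b: "-1 \<le> pr x \<bullet> pr y" "pr x \<bullet> pr y \<le> 1" using pr_inner_bounds by auto
  show ?thesis
  proof
    assume "sph_dist (pr x) (pr y) = pi/2"
    hence "arccos (pr x \<bullet> pr y) = pi/2" by (simp only: sph_dist_def)
    hence "cos (arccos (pr x \<bullet> pr y)) = cos (pi/2)" by (simp only:)
    hence "pr x \<bullet> pr y = 0" using b by simp
    thus "x \<bullet> y = -1" using pr_inner_zero by blast
  next
    assume "x \<bullet> y = -1"
    hence "pr x \<bullet> pr y = 0" using pr_inner_zero by blast
    thus "sph_dist (pr x) (pr y) = pi/2" by (simp add: sph_dist_def)
  qed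
qed

lemma dist_ub: "sph_dist (pr x) (pr y) \<le> pi"
  using pr_inner_bounds[of x y] by (simp add: sph_dist_def arccos_ubound)

theorem mainTheorem7:
  fixes \<gamma> :: "'a::euclidean_space \<Rightarrow> real"
  assumes "continuous_on (sphere 0 1) \<gamma>"
    and "\<forall>\<theta> \<in> sphere 0 1. \<gamma> \<theta> > 0"
  shows "self_dual \<gamma> \<longleftrightarrow>
         constant_diameter (alpha_N_inv_image (Id_map ` wulff \<gamma>)) (pi / 2)"
proof -
  define W where "W = wulff \<gamma>"
  obtain m where m: "m > 0" "ball 0 m \<subseteq> W" using wulff_basic(1)[OF assms] W_def by blast
  obtain M where M: "M > 0" "\<forall>x\<in>W. norm x \<le> M" using wulff_basic(2)[OF assms] W_def by blast
  have clW: "closed W" using wulff_basic(3)[OF assms] W_def by simp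
  have cW: "compact W" using clW M by (auto simp: compact_eq_bounded_closed bounded_iff)
  have neW: "W \<noteq> {}" using m by auto
  have "dual_gamma \<gamma> = (\<lambda>\<theta>. 1 / radial W (- \<theta>))" by (rule ext) (simp add: dual_gamma_def W_def)
  hence sd: "self_dual \<gamma> \<longleftrightarrow> W = Dset W"
    using dual_eq[OF m M(2)] by (simp add: self_dual_def dual_wulff_def W_def)
  have K: "alpha_N_inv_image (Id_map ` wulff \<gamma>) = pr ` W" using K_char W_def by simp
  obtain e :: 'a where e: "norm e = 1" using sphere_ne by fastforce
  define z where "z = (M + 1) *\<^sub>R e"
  have zW: "z \<notin> W"
  proof
    assume "z \<in> W"
    hence "norm z \<le> M" using M by blast
    thus False using e M by (simp add: z_def)
  qed
  define A where "A = {sph_dist P Q | P Q. P \<in> pr ` W \<and> Q \<in> pr ` W}"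
  have Aub: "bdd_above A" unfolding A_def by (rule bdd_aboveI[of _ pi]) (auto simp: dist_ub)
  have ray': "\<And>z. z \<notin> W \<Longrightarrow> \<exists>t. 0 < t \<and> t < 1 \<and> t *\<^sub>R z \<in> W \<and>
            (\<forall>\<delta>>0. \<exists>w. w \<notin> W \<and> norm (w - t *\<^sub>R z) < \<delta>)"
  proof -
    fix z assume "z \<notin> W"
    then obtain t where t: "0 < t" "t < 1" "t *\<^sub>R z \<in> W"
      "\<forall>\<delta>>0. \<exists>s. s *\<^sub>R z \<notin> W \<and> norm (s *\<^sub>R z - t *\<^sub>R z) < \<delta>"
      using ray[OF clW m] by blast
    have "\<forall>\<delta>>0. \<exists>w. w \<notin> W \<and> norm (w - t *\<^sub>R z) < \<delta>"
    proof (intro allI impI)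
      fix \<delta> :: real assume "\<delta> > 0"
      then obtain s where "s *\<^sub>R z \<notin> W \<and> norm (s *\<^sub>R z - t *\<^sub>R z) < \<delta>" using t(4) by blast
      thus "\<exists>w. w \<notin> W \<and> norm (w - t *\<^sub>R z) < \<delta>" by blast
    qed
    thus "\<exists>t. 0 < t \<and> t < 1 \<and> t *\<^sub>R z \<in> W \<and>
            (\<forall>\<delta>>0. \<exists>w. w \<notin> W \<and> norm (w - t *\<^sub>R z) < \<delta>)" using t(1-3) by blast
  qed
  show ?thesis unfolding sd K constant_diameter_def sph_diameter_def A_def[symmetric]
  proof
    assume WD: "W = Dset W"
    have opp: "\<And>x. x \<in> W \<Longrightarrow> x \<notin> interior W \<Longrightarrow> \<exists>y\<in>W. x \<bullet> y = -1"
    proof (rule ccontr)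
      fix x assume x: "x \<in> W" "x \<notin> interior W" "\<not> (\<exists>y\<in>W. x \<bullet> y = -1)"
      then obtain r where "r > 0" "ball x r \<subseteq> Dset W"
        using interior_L[OF cW neW M(2,1), of x] WD by auto
      thus False using x WD by (metis interior_ball interior_mono centre_in_ball subsetD)
    qed
    obtain t where t: "t *\<^sub>R z \<in> W" "\<forall>\<delta>>0. \<exists>w. w \<notin> W \<and> norm (w - t *\<^sub>R z) < \<delta>"
      using ray'[OF zW] by blast
    have "t *\<^sub>R z \<notin> interior W"
    proof
      assume "t *\<^sub>R z \<in> interior W"
      then obtain r where r: "r > 0" "ball (t *\<^sub>R z) r \<subseteq> W" by (meson mem_interior)
      then obtain w where "w \<notin> W" "norm (w - t *\<^sub>R z) < r" using t by blast
      thus False using r by (auto simp: dist_norm norm_minus_commute)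
    qed
    then obtain y where y: "y \<in> W" "(t *\<^sub>R z) \<bullet> y = -1" using opp t by blast
    have d2: "sph_dist (pr (t *\<^sub>R z)) (pr y) = pi/2" using y(2) dist_eq by blast
    have piA: "pi/2 \<in> A" unfolding A_def
      by (rule CollectI, rule exI[of _ "pr (t *\<^sub>R z)"], rule exI[of _ "pr y"]) (use d2 y(1) t(1) in auto)
    have allle: "\<forall>a\<in>A. a \<le> pi/2"
    proof
      fix a assume "a \<in> A"
      then obtain x y where xy: "x \<in> W" "y \<in> W" "a = sph_dist (pr x) (pr y)" unfolding A_def by blast
      have "x \<in> Dset W" using xy WD by simp
      hence "x \<bullet> y \<ge> -1" using xy unfolding Dset_def by blast
      thus "a \<le> pi/2" using xy dist_le by blast
    qed
    have "Sup A = pi/2" by (rule cSup_eq_maximum[OF piA]) (use allle in auto)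
    moreover have "\<forall>P\<in>top_of_set (sphere 0 1) frontier_of pr ` W. \<exists>Q\<in>pr ` W. sph_dist P Q = pi / 2"
    proof
      fix P assume "P \<in> top_of_set (sphere 0 1) frontier_of pr ` W"
      then obtain x where x: "x \<in> W" "P = pr x" "x \<notin> interior W" using front1[OF cW] by blast
      then obtain y where "y \<in> W" "x \<bullet> y = -1" using opp by blast
      thus "\<exists>Q\<in>pr ` W. sph_dist P Q = pi / 2" using x dist_eq by blast
    qed
    ultimately show "Sup A = pi / 2 \<and>
      (\<forall>P\<in>top_of_set (sphere 0 1) frontier_of pr ` W. \<exists>Q\<in>pr ` W. sph_dist P Q = pi / 2)" by blast
  next
    assume cd: "Sup A = pi / 2 \<and>
      (\<forall>P\<in>top_of_set (sphere 0 1) frontier_of pr ` W. \<exists>Q\<in>pr ` W. sph_dist P Q = pi / 2)"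
    have sub1: "W \<subseteq> Dset W"
    proof
      fix x assume x: "x \<in> W"
      show "x \<in> Dset W" unfolding Dset_def
      proof (intro CollectI ballI)
        fix y assume y: "y \<in> W"
        have "sph_dist (pr x) (pr y) \<in> A" unfolding A_def using x y by blast
        hence "sph_dist (pr x) (pr y) \<le> pi/2" using cSup_upper[OF _ Aub] cd by fastforce
        thus "x \<bullet> y \<ge> -1" using dist_le by blast
      qed
    qed
    have "Dset W \<subseteq> W"
    proof
      fix z assume zD: "z \<in> Dset W"
      show "z \<in> W"
      proof (rule ccontr)
        assume zW: "z \<notin> W"
        obtain t where t: "0 < t" "t < 1" "t *\<^sub>R z \<in> W" "\<forall>\<delta>>0. \<exists>w. w \<notin> W \<and> norm (w - t *\<^sub>R z) < \<delta>"
          using ray'[OF zW] by blast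
        have "pr (t *\<^sub>R z) \<in> top_of_set (sphere 0 1) frontier_of pr ` W"
          by (rule front2[OF t(3,4)])
        then obtain Q where "Q \<in> pr ` W" "sph_dist (pr (t *\<^sub>R z)) Q = pi/2" using cd by blast
        then obtain y where y: "y \<in> W" "(t *\<^sub>R z) \<bullet> y = -1" using dist_eq by blast
        have "z \<bullet> y \<ge> -1" using zD y unfolding Dset_def by blast
        hence "t * (z \<bullet> y) \<ge> -t" using t mult_left_mono[of "-1" "z \<bullet> y" t] by simp
        thus False using y t by simp
      qed
    qed
    thus "W = Dset W" using sub1 by blast
  qed
qed


end
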